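(* Let $d>0$, let $J$ satisfy (J) and (J2), let $f$ satisfy (f3), and let $c_*$ be the minimal traveling wave speed. Let $0<c_1<c_2<c_*$, and for $i=1,2$ and $\sigma\in(0,1)$ let $\phi_\sigma^i$ denote the solution obtained from the iteration process described in the context with $c=c_i$. Then there exists $\delta_0\in(0,1]$ such that $\phi_\sigma^1\ge\phi_\sigma^2$ on $\mathbb{R}$ for all $\sigma\in(0,\delta_0)$.
   Context: Condition (J): $J\in C(\mathbb{R})\cap L^\infty(\mathbb{R})$, $J\ge 0$, $J(0)>0$, $\int_{\mathbb{R}}J=1$, $J$ even. Condition (J2): there exists $\lambda>0$ with $\int_{\mathbb{R}}J(x)e^{\lambda x}dx<\infty$. Condition (f3): $f\in C^1([0,\infty))$, $f(0)=f(1)=0$, $f>0$ in $(0,1)$, $f'(0)>0>f'(1)$, $f(u)/u$ nonincreasing in $u>0$. Known fact: under (J), (J2), (f3) there is $c_*>0$ such that $d\int_{\mathbb{R}}J(x-y)\phi(y)dy-d\phi(x)+c\phi'(x)+f(\phi(x))=0$ on $\mathbb{R}$, $\phi(-\infty)=1$, $\phi(+\infty)=0$, has a nonincreasing bounded solution iff $c\ge c_*$. Iteration process (for given $c\in(0,c_* )$ and $\sigma\in(0,1)$): choose $M>0$ such that $\tilde f(u):=(cM-d)u+f(u)$ is increasing on $[0,1]$; $a(x)=\int_{-\infty}^xJ(y)dy$; define $A_c[\phi](x)=\sigma$ for $x\ge0$ and for $x<0$ $A_c[\phi](x)=e^{Mx}\sigma+\frac{e^{Mx}}{c}\int_x^0e^{-M\xi}\big[d\int_{-\infty}^0J(\xi-y)\phi(y)dy+d\sigma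 a(\xi)+\tilde f(\phi(\xi))\big]d\xi$. Let $\phi_*$ be a nonincreasing traveling wave of speed $c_*$ translated so $\phi_*(0)=\sigma$, and $\phi_*^\sigma=\max\{\phi_*,\sigma\}$. The solution is $\phi_\sigma=\lim_{n\to\infty}A_c^n[\phi_*^\sigma]$; it solves $d\int_{\mathbb{R}}J(x-y)\phi(y)dy-d\phi+c\phi'+f(\phi)=0$ for $x<0$, $\phi(-\infty)=1$, $\phi=\sigma$ on $[0,\infty)$. *)

theory Defs
  imports "HOL-Analysis.Analysis"
begin

definition cond_J :: "(real \<Rightarrow> real) \<Rightarrow> bool" where
  "cond_J J \<longleftrightarrow> continuous_on UNIV J \<and> bounded (range J) \<and> (\<forall>x. J x \<ge> 0) \<and> J 0 > 0
     \<and> integrable lborel J \<and> (\<integral>x. J x \<partial>lborel) = 1 \<and> (\<forall>x. J (- x) = J x)"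

definition cond_J2 :: "(real \<Rightarrow> real) \<Rightarrow> bool" where
  "cond_J2 J \<longleftrightarrow> (\<exists>lam>0. integrable lborel (\<lambda>x. J x * exp (lam * x)))"

definition cond_f3 :: "(real \<Rightarrow> real) \<Rightarrow> bool" where
  "cond_f3 f \<longleftrightarrow>
     (\<exists>f'. continuous_on {0..} f' \<and> (\<forall>u\<ge>0. (f has_real_derivative f' u) (at u within {0..}))
           \<and> f' 0 > 0 \<and> f' 1 < 0)
     \<and> f 0 = 0 \<and> f 1 = 0 \<and> (\<forall>u. 0 < u \<and> u < 1 \<longrightarrow> f u > 0)
     \<and> (\<forall>u v. 0 < u \<and> u \<le> v \<longrightarrow> f v / v \<le> f u / u)"

definition is_TW :: "real \<Rightarrow> (real \<Rightarrow> real) \<Rightarrow> (real \<Rightarrow> real) \<Rightarrow> real \<Rightarrow> (real \<Rightarrow> real) \<Rightarrow> bool" where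
  "is_TW d J f c \<phi> \<longleftrightarrow> antimono \<phi> \<and> bounded (range \<phi>)
     \<and> (\<exists>\<phi>'. \<forall>x. (\<phi> has_real_derivative \<phi>' x) (at x)
          \<and> d * (\<integral>y. J (x - y) * \<phi> y \<partial>lborel) - d * \<phi> x + c * \<phi>' x + f (\<phi> x) = 0)
     \<and> (\<phi> \<longlongrightarrow> 1) at_bot \<and> (\<phi> \<longlongrightarrow> 0) at_top"

text \<open>Minimal wave speed c_* (the known fact says the set of admissible speeds is [c_*,oo)).\<close>
definition cstar :: "real \<Rightarrow> (real \<Rightarrow> real) \<Rightarrow> (real \<Rightarrow> real) \<Rightarrow> real" where
  "cstar d J f = Inf {c. \<exists>\<phi>. is_TW d J f c \<phi>}"

definition acum :: "(real \<Rightarrow> real) \<Rightarrow> real \<Rightarrow> real" where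
  "acum J x = (LINT y:{..x}|lborel. J y)"

definition ftilde :: "real \<Rightarrow> (real \<Rightarrow> real) \<Rightarrow> real \<Rightarrow> real \<Rightarrow> real \<Rightarrow> real" where
  "ftilde d f c M u = (c * M - d) * u + f u"

definition Aop :: "real \<Rightarrow> (real \<Rightarrow> real) \<Rightarrow> (real \<Rightarrow> real) \<Rightarrow> real \<Rightarrow> real \<Rightarrow> real
                   \<Rightarrow> (real \<Rightarrow> real) \<Rightarrow> real \<Rightarrow> real" where
  "Aop d J f c M \<sigma> \<phi> x =
     (if x \<ge> 0 then \<sigma>
      else exp (M * x) * \<sigma> + exp (M * x) / c *
        (LINT \<xi>:{x..0}|lborel. exp (- M * \<xi>) *
            (d * (LINT y:{..0}|lborel. J (\<xi> - y) * \<phi> y) + d * \<sigma> * acum J \<xi>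
             + ftilde d f c M (\<phi> \<xi>))))"

definition phi_iter :: "real \<Rightarrow> (real \<Rightarrow> real) \<Rightarrow> (real \<Rightarrow> real) \<Rightarrow> real \<Rightarrow> real \<Rightarrow> real
                   \<Rightarrow> (real \<Rightarrow> real) \<Rightarrow> real \<Rightarrow> real" where
  "phi_iter d J f c M \<sigma> \<phi>s x =
     lim (\<lambda>n. ((Aop d J f c M \<sigma>) ^^ n) (\<lambda>y. max (\<phi>s y) \<sigma>) x)"

end

theory Submission imports Defs begin

locale iter =
  fixes d :: real and J f :: "real \<Rightarrow> real" and c M \<sigma> cs :: real and ps :: "real \<Rightarrow> real"
  assumes d_pos: "d > 0" and condJ: "cond_J J" and f_cont: "continuous_on {0..} f"
    and f_pos: "\<And>v. 0 < v \<Longrightarrow> v < 1 \<Longrightarrow> f v > 0" and f1: "f 1 = 0"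
    and c_pos: "c > 0" and M_pos: "M > 0" and smono: "strict_mono_on {0..1} (ftilde d f c M)"
    and sig0: "0 < \<sigma>" and sig1: "\<sigma> < 1" and c_lt: "c < cs"
    and TW: "is_TW d J f cs ps" and ps0: "ps 0 = \<sigma>"
begin

lemma J_nonneg: "J x \<ge> 0" using condJ unfolding cond_J_def by auto
lemma J_int: "integrable lborel J" using condJ unfolding cond_J_def by auto
lemma J_total: "(\<integral>x. J x \<partial>lborel) = 1" using condJ unfolding cond_J_def by auto
lemma J_cont: "continuous_on UNIV J" using condJ unfolding cond_J_def by auto
lemma J_meas[measurable]: "J \<in> borel_measurable borel"
  using J_int borel_measurable_integrable by auto

lemma J_shift_int: "integrable lborel (\<lambda>y. J (\<xi> - y))"
  using lborel_integrable_real_affine_iff[of "-1" J \<xi>] J_int by simp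

lemma J_shift_total: "(\<integral>y. J (\<xi> - y) \<partial>lborel) = 1"
  using lborel_integral_real_affine[of "-1" J \<xi>] J_total by simp

definition Conv :: "(real \<Rightarrow> real) \<Rightarrow> real \<Rightarrow> real" where
  "Conv g \<xi> = (\<integral>y. J (\<xi> - y) * g y \<partial>lborel)"

lemma conv_int:
  assumes [measurable]: "g \<in> borel_measurable borel" and b: "\<And>y. \<bar>g y\<bar> \<le> B"
  shows "integrable lborel (\<lambda>y. J (\<xi> - y) * g y)"
proof (rule Bochner_Integration.integrable_bound[of _ "\<lambda>y. B * J (\<xi> - y)"])
  show "integrable lborel (\<lambda>y. B * J (\<xi> - y))" using J_shift_int by simp
  show "(\<lambda>y. J (\<xi> - y) * g y) \<in> borel_measurable lborel" by measurable
  show "AE x in lborel. norm (J (\<xi> - x) * g x) \<le> norm (B * J (\<xi> - x))"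
  proof (intro AE_I2)
    fix x
    have "\<bar>J (\<xi> - x) * g x\<bar> = J (\<xi> - x) * \<bar>g x\<bar>" using J_nonneg by (simp add: abs_mult)
    also have "\<dots> \<le> J (\<xi> - x) * B" using b J_nonneg by (simp add: mult_left_mono)
    also have "\<dots> \<le> \<bar>B * J (\<xi> - x)\<bar>" by (simp add: mult.commute)
    finally show "norm (J (\<xi> - x) * g x) \<le> norm (B * J (\<xi> - x))" by simp
  qed
qed

lemma conv_mono:
  assumes "g1 \<in> borel_measurable borel" "\<And>y. \<bar>g1 y\<bar> \<le> Ba"
    and "g2 \<in> borel_measurable borel" "\<And>y. \<bar>g2 y\<bar> \<le> Bb"
    and le: "\<And>y. g1 y \<le> g2 y"
  shows "Conv g1 \<xi> \<le> Conv g2 \<xi>"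
  unfolding Conv_def
  by (rule integral_mono[OF conv_int[OF assms(1,2)] conv_int[OF assms(3,4)]])
     (simp add: J_nonneg le mult_left_mono)

lemma conv_const: "Conv (\<lambda>_. k) \<xi> = k"
  unfolding Conv_def using J_shift_total by simp

lemma conv_shift:
  shows "Conv (\<lambda>y. g (y - h)) \<xi> = Conv g (\<xi> - h)"
  unfolding Conv_def
  using lborel_integral_real_affine[of 1 "\<lambda>y. J (\<xi> - h - y) * g y" "-h"]
  by (simp add: algebra_simps)

lemma conv_alt: "Conv g \<xi> = (\<integral>z. J z * g (\<xi> - z) \<partial>lborel)"
  unfolding Conv_def
  using lborel_integral_real_affine[of "-1" "\<lambda>y. J (\<xi> - y) * g y" \<xi>]
  by simp

lemma conv_meas:
  assumes [measurable]: "g \<in> borel_measurable borel"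
  shows "Conv g \<in> borel_measurable borel"
proof -
  have "(\<lambda>\<xi>. \<integral>y. J (\<xi> - y) * g y \<partial>lborel) \<in> borel_measurable borel"
    by measurable
  then show ?thesis unfolding Conv_def[abs_def] .
qed

lemma conv_lim:
  assumes [measurable]: "\<And>n. gs n \<in> borel_measurable borel" "g \<in> borel_measurable borel"
    and b: "\<And>n y. \<bar>gs n y\<bar> \<le> B" and lim: "\<And>y. (\<lambda>n. gs n y) \<longlonglongrightarrow> g y"
  shows "(\<lambda>n. Conv (gs n) \<xi>) \<longlonglongrightarrow> Conv g \<xi>"
  unfolding Conv_def
proof (rule integral_dominated_convergence[where w="\<lambda>y. B * J (\<xi> - y)"])
  show "integrable lborel (\<lambda>y. B * J (\<xi> - y))" using J_shift_int by simp
  show "(\<lambda>y. J (\<xi> - y) * g y) \<in> borel_measurable lborel" by measurable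
  show "\<And>n. (\<lambda>y. J (\<xi> - y) * gs n y) \<in> borel_measurable lborel" by measurable
  show "AE x in lborel. (\<lambda>n. J (\<xi> - x) * gs n x) \<longlonglongrightarrow> J (\<xi> - x) * g x"
    by (intro AE_I2 tendsto_mult tendsto_const lim)
  show "\<And>n. AE x in lborel. norm (J (\<xi> - x) * gs n x) \<le> B * J (\<xi> - x)"
  proof (intro AE_I2)
    fix n x
    have "\<bar>J (\<xi> - x) * gs n x\<bar> = J (\<xi> - x) * \<bar>gs n x\<bar>" using J_nonneg by (simp add: abs_mult)
    also have "\<dots> \<le> J (\<xi> - x) * B" using b J_nonneg by (simp add: mult_left_mono)
    finally show "norm (J (\<xi> - x) * gs n x) \<le> B * J (\<xi> - x)" by (simp add: mult.commute)
  qed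
qed

lemma conv_cont:
  assumes cg: "continuous_on UNIV g" and b: "\<And>y. \<bar>g y\<bar> \<le> B"
  shows "continuous_on UNIV (Conv g)"
proof (rule continuous_on_sequentiallyI)
  have gm[measurable]: "g \<in> borel_measurable borel" using cg by (rule borel_measurable_continuous_onI)
  fix xs :: "nat \<Rightarrow> real" and a assume xs: "xs \<longlonglongrightarrow> a"
  have "(\<lambda>n. \<integral>z. J z * g (xs n - z) \<partial>lborel) \<longlonglongrightarrow> (\<integral>z. J z * g (a - z) \<partial>lborel)"
  proof (rule integral_dominated_convergence[where w="\<lambda>z. B * J z"])
    show "integrable lborel (\<lambda>z. B * J z)" using J_int by simp
    show "(\<lambda>z. J z * g (a - z)) \<in> borel_measurable lborel" by measurable
    show "\<And>n. (\<lambda>z. J z * g (xs n - z)) \<in> borel_measurable lborel" by measurable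
    show "AE z in lborel. (\<lambda>n. J z * g (xs n - z)) \<longlonglongrightarrow> J z * g (a - z)"
    proof (intro AE_I2 tendsto_mult tendsto_const)
      fix z
      have "(\<lambda>n. xs n - z) \<longlonglongrightarrow> a - z" by (intro tendsto_intros xs)
      moreover have "isCont g (a - z)" using cg by (simp add: continuous_on_eq_continuous_at)
      ultimately show "(\<lambda>n. g (xs n - z)) \<longlonglongrightarrow> g (a - z)"
        using isCont_tendsto_compose by blast
    qed
    show "\<And>n. AE z in lborel. norm (J z * g (xs n - z)) \<le> B * J z"
    proof (intro AE_I2)
      fix n z
      have "\<bar>J z * g (xs n - z)\<bar> = J z * \<bar>g (xs n - z)\<bar>" using J_nonneg by (simp add: abs_mult)
      also have "\<dots> \<le> J z * B" using b J_nonneg by (simp add: mult_left_mono)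
      finally show "norm (J z * g (xs n - z)) \<le> B * J z" by (simp add: mult.commute)
    qed
  qed
  then show "(\<lambda>n. Conv g (xs n)) \<longlonglongrightarrow> Conv g a" by (simp add: conv_alt)
qed


definition extd :: "(real \<Rightarrow> real) \<Rightarrow> real \<Rightarrow> real" where
  "extd \<phi> y = (if y \<le> 0 then \<phi> y else \<sigma>)"

definition Adm :: "(real \<Rightarrow> real) \<Rightarrow> bool" where
  "Adm \<phi> \<longleftrightarrow> (\<forall>y. \<sigma> \<le> \<phi> y \<and> \<phi> y \<le> 1) \<and> \<phi> \<in> borel_measurable borel"

definition H :: "(real \<Rightarrow> real) \<Rightarrow> real \<Rightarrow> real" where
  "H \<phi> \<xi> = d * Conv (extd \<phi>) \<xi> + ftilde d f c M (\<phi> \<xi>)"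

abbreviation "A \<equiv> Aop d J f c M \<sigma>"

lemma Adm_meas: "Adm \<phi> \<Longrightarrow> \<phi> \<in> borel_measurable borel" unfolding Adm_def by auto
lemma Adm_lo: "Adm \<phi> \<Longrightarrow> \<sigma> \<le> \<phi> y" unfolding Adm_def by auto
lemma Adm_hi: "Adm \<phi> \<Longrightarrow> \<phi> y \<le> 1" unfolding Adm_def by auto
lemma Adm_abs: "Adm \<phi> \<Longrightarrow> \<bar>\<phi> y\<bar> \<le> 1" using Adm_lo[of \<phi> y] Adm_hi[of \<phi> y] sig0 by auto

lemma extd_Adm: "Adm \<phi> \<Longrightarrow> Adm (extd \<phi>)"
proof -
  assume a: "Adm \<phi>"
  have [measurable]: "\<phi> \<in> borel_measurable borel" using a by (rule Adm_meas)
  have "(\<lambda>y. if y \<le> 0 then \<phi> y else \<sigma>) \<in> borel_measurable borel" by measurable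
  then show ?thesis using a sig1 unfolding Adm_def extd_def[abs_def] by auto
qed

lemma ft_mono: "0 \<le> a \<Longrightarrow> a \<le> b \<Longrightarrow> b \<le> 1 \<Longrightarrow> ftilde d f c M a \<le> ftilde d f c M b"
  using smono unfolding strict_mono_on_def
  by (cases "a = b") (auto simp: less_imp_le)

lemma ft1: "ftilde d f c M 1 = c * M - d" using f1 unfolding ftilde_def by simp

lemma ftsig: "ftilde d f c M \<sigma> \<ge> (c * M - d) * \<sigma>"
  using f_pos[of \<sigma>] sig0 sig1 unfolding ftilde_def by simp

lemma f_meas_comp:
  assumes [measurable]: "\<phi> \<in> borel_measurable borel" and nn: "\<And>y. 0 \<le> \<phi> y"
  shows "(\<lambda>y. f (\<phi> y)) \<in> borel_measurable borel"
proof -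
  have "continuous_on UNIV (\<lambda>v. f (max v 0))"
    by (rule continuous_on_compose2[OF f_cont]) (auto intro!: continuous_intros)
  then have [measurable]: "(\<lambda>v. f (max v 0)) \<in> borel_measurable borel"
    by (rule borel_measurable_continuous_onI)
  have "(\<lambda>y. f (max (\<phi> y) 0)) \<in> borel_measurable borel" by measurable
  moreover have "(\<lambda>y. f (max (\<phi> y) 0)) = (\<lambda>y. f (\<phi> y))" proof (rule HOL.ext)
    fix y show "f (max (\<phi> y) 0) = f (\<phi> y)" using nn[of y] by (simp add: max_absorb1)
  qed
  ultimately show ?thesis by simp
qed

lemma H_meas: assumes "Adm \<phi>" shows "H \<phi> \<in> borel_measurable borel"
proof -
  have [measurable]: "\<phi> \<in> borel_measurable borel" using assms by (rule Adm_meas)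
  have [measurable]: "Conv (extd \<phi>) \<in> borel_measurable borel"
    using conv_meas Adm_meas extd_Adm assms by blast
  have [measurable]: "(\<lambda>y. f (\<phi> y)) \<in> borel_measurable borel"
    by (rule f_meas_comp[OF Adm_meas[OF assms]]) (use Adm_lo[OF assms] sig0 in \<open>meson less_le_trans less_imp_le\<close>)
  show ?thesis unfolding H_def[abs_def] ftilde_def by measurable
qed

lemma Conv_extd_bounds:
  assumes "Adm \<phi>" shows "\<sigma> \<le> Conv (extd \<phi>) \<xi>" "Conv (extd \<phi>) \<xi> \<le> 1"
proof -
  have e: "Adm (extd \<phi>)" using extd_Adm assms by blast
  have "Conv (\<lambda>_. \<sigma>) \<xi> \<le> Conv (extd \<phi>) \<xi>"
    by (rule conv_mono[where Ba="\<bar>\<sigma>\<bar>" and Bb=1]) (use e Adm_abs Adm_lo Adm_meas in auto)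
  then show "\<sigma> \<le> Conv (extd \<phi>) \<xi>" by (simp add: conv_const)
  have "Conv (extd \<phi>) \<xi> \<le> Conv (\<lambda>_. 1) \<xi>"
    by (rule conv_mono[where Ba=1 and Bb=1]) (use e Adm_abs Adm_hi Adm_meas in auto)
  then show "Conv (extd \<phi>) \<xi> \<le> 1" by (simp add: conv_const)
qed

lemma H_bounds:
  assumes "Adm \<phi>" shows "c * M * \<sigma> \<le> H \<phi> \<xi>" "H \<phi> \<xi> \<le> c * M"
proof -
  have f1': "ftilde d f c M (\<phi> \<xi>) \<le> c * M - d"
    using ft_mono[of "\<phi> \<xi>" 1] ft1 Adm_hi[OF assms] Adm_lo[OF assms] sig0
    by (metis less_le_trans less_imp_le order_refl)
  have f2': "ftilde d f c M (\<phi> \<xi>) \<ge> (c * M - d) * \<sigma>"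
    using ft_mono[of \<sigma> "\<phi> \<xi>"] ftsig Adm_hi[OF assms] Adm_lo[OF assms] sig0 by force
  have "d * \<sigma> \<le> d * Conv (extd \<phi>) \<xi>" "d * Conv (extd \<phi>) \<xi> \<le> d"
    using Conv_extd_bounds[OF assms, of \<xi>] d_pos by auto
  then show "c * M * \<sigma> \<le> H \<phi> \<xi>" "H \<phi> \<xi> \<le> c * M"
    using f1' f2' unfolding H_def by (auto simp: algebra_simps)
qed

lemma Kid:
  assumes [measurable]: "\<phi> \<in> borel_measurable borel" and b: "\<And>y. \<bar>\<phi> y\<bar> \<le> B"
  shows "(LINT y:{..0}|lborel. J (\<xi> - y) * \<phi> y) + \<sigma> * acum J \<xi> = Conv (extd \<phi>) \<xi>"
proof -
  have i1: "integrable lborel (\<lambda>y. indicator {..0} y *\<^sub>R (J (\<xi> - y) * \<phi> y))"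
    by (rule integrable_mult_indicator) (auto intro: conv_int b)
  have i2: "integrable lborel (\<lambda>y. indicator {0<..} y *\<^sub>R J (\<xi> - y))"
    by (rule integrable_mult_indicator) (auto intro: J_shift_int)
  have "Conv (extd \<phi>) \<xi> = (\<integral>y. indicator {..0} y *\<^sub>R (J (\<xi> - y) * \<phi> y)
          + \<sigma> * (indicator {0<..} y *\<^sub>R J (\<xi> - y)) \<partial>lborel)"
    unfolding Conv_def extd_def by (intro Bochner_Integration.integral_cong) (auto simp: indicator_def)
  also have "\<dots> = (LINT y:{..0}|lborel. J (\<xi> - y) * \<phi> y)
          + \<sigma> * (\<integral>y. indicator {0<..} y *\<^sub>R J (\<xi> - y) \<partial>lborel)"
    using i1 i2 by (simp add: set_lebesgue_integral_def)
  also have "(\<integral>y. indicator {0<..} y *\<^sub>R J (\<xi> - y) \<partial>lborel) = acum J \<xi>"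
  proof -
    have "acum J \<xi> = (\<integral>y. indicator {..\<xi>} y *\<^sub>R J y \<partial>lborel)"
      unfolding acum_def set_lebesgue_integral_def ..
    also have "\<dots> = (\<integral>y. indicator {..\<xi>} (\<xi> + -1 * y) *\<^sub>R J (\<xi> + -1 * y) \<partial>lborel)"
      using lborel_integral_real_affine[of "-1" "\<lambda>y. indicator {..\<xi>} y *\<^sub>R J y" \<xi>] by simp
    also have "\<dots> = (\<integral>y. indicator {0<..} y *\<^sub>R J (\<xi> - y) \<partial>lborel)"
    proof (rule integral_cong_AE)
      show "(\<lambda>y. indicator {..\<xi>} (\<xi> + -1 * y) *\<^sub>R J (\<xi> + -1 * y)) \<in> borel_measurable lborel"
        by measurable
      show "(\<lambda>y. indicator {0<..} y *\<^sub>R J (\<xi> - y)) \<in> borel_measurable lborel" by measurable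
      show "AE y in lborel. indicator {..\<xi>} (\<xi> + -1 * y) *\<^sub>R J (\<xi> + -1 * y) = indicator {0<..} y *\<^sub>R J (\<xi> - y)"
        using AE_lborel_singleton[of 0] by eventually_elim (auto simp: indicator_def)
    qed
    finally show ?thesis ..
  qed
  finally show ?thesis by simp
qed

lemma A_eq:
  assumes "Adm \<phi>"
  shows "A \<phi> x = (if 0 \<le> x then \<sigma> else exp (M * x) * \<sigma> + exp (M * x) / c *
            (LINT \<xi>:{x..0}|lborel. exp (- M * \<xi>) * H \<phi> \<xi>))"
proof -
  have "\<And>\<xi>. exp (- M * \<xi>) * (d * (LINT y:{..0}|lborel. J (\<xi> - y) * \<phi> y) + d * \<sigma> * acum J \<xi>
             + ftilde d f c M (\<phi> \<xi>)) = exp (- M * \<xi>) * H \<phi> \<xi>"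
  proof -
    fix \<xi>
    have "d * (LINT y:{..0}|lborel. J (\<xi> - y) * \<phi> y) + d * \<sigma> * acum J \<xi> = d * Conv (extd \<phi>) \<xi>"
    proof -
      have "d * (LINT y:{..0}|lborel. J (\<xi> - y) * \<phi> y) + d * \<sigma> * acum J \<xi>
           = d * ((LINT y:{..0}|lborel. J (\<xi> - y) * \<phi> y) + \<sigma> * acum J \<xi>)"
        by (simp only: distrib_left mult.assoc)
      then show ?thesis using Kid[OF Adm_meas[OF assms] Adm_abs[OF assms], of \<xi>] by simp
    qed
    then show "exp (- M * \<xi>) * (d * (LINT y:{..0}|lborel. J (\<xi> - y) * \<phi> y) + d * \<sigma> * acum J \<xi>
             + ftilde d f c M (\<phi> \<xi>)) = exp (- M * \<xi>) * H \<phi> \<xi>" unfolding H_def by simp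
  qed
  then show ?thesis unfolding Aop_def by simp
qed

lemma g_int:
  assumes "Adm \<phi>"
  shows "set_integrable lborel {x..0} (\<lambda>\<xi>. exp (- M * \<xi>) * H \<phi> \<xi>)"
  unfolding set_integrable_def
proof (rule integrableI_bounded_set_indicator[where B="exp (- M * x) * (c * M)"])
  have [measurable]: "H \<phi> \<in> borel_measurable borel" using H_meas[OF assms] .
  show "(\<lambda>\<xi>. exp (- M * \<xi>) * H \<phi> \<xi>) \<in> borel_measurable lborel" by measurable
  show "{x..0} \<in> sets lborel" by simp
  show "emeasure lborel {x..0} < \<infinity>" by (rule emeasure_bounded_finite) simp
  show "AE \<xi> in lborel. \<xi> \<in> {x..0} \<longrightarrow> norm (exp (- M * \<xi>) * H \<phi> \<xi>) \<le> exp (- M * x) * (c * M)"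
  proof (intro AE_I2 impI)
    fix \<xi> assume "\<xi> \<in> {x..0}"
    then have "exp (- M * \<xi>) \<le> exp (- M * x)" using M_pos by (auto intro: mult_left_mono)
    moreover have "0 \<le> H \<phi> \<xi>" "H \<phi> \<xi> \<le> c * M" using H_bounds[OF assms, of \<xi>] c_pos M_pos sig0
      by (auto intro: order_trans[rotated])
    ultimately show "norm (exp (- M * \<xi>) * H \<phi> \<xi>) \<le> exp (- M * x) * (c * M)"
      by (simp add: abs_mult mult_mono)
  qed
qed


lemma BP:
  assumes x: "x \<le> 0" and c\<psi>: "continuous_on {x..0} \<psi>" and c\<psi>': "continuous_on {x..0} \<psi>'"
    and d\<psi>: "\<And>\<xi>. x < \<xi> \<Longrightarrow> \<xi> < 0 \<Longrightarrow> (\<psi> has_real_derivative \<psi>' \<xi>) (at \<xi>)"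
  shows "set_integrable lborel {x..0} (\<lambda>\<xi>. exp (- M * \<xi>) * (c * M * \<psi> \<xi> - c * \<psi>' \<xi>))"
    and "(LINT \<xi>:{x..0}|lborel. exp (- M * \<xi>) * (c * M * \<psi> \<xi> - c * \<psi>' \<xi>)) = c * (exp (- M * x) * \<psi> x - \<psi> 0)"
proof -
  let ?g = "\<lambda>\<xi>. exp (- M * \<xi>) * (c * M * \<psi> \<xi> - c * \<psi>' \<xi>)"
  have cg: "continuous_on {x..0} ?g" by (intro continuous_intros c\<psi> c\<psi>')
  show si: "set_integrable lborel {x..0} ?g"
    unfolding set_integrable_def by (rule borel_integrable_compact[OF compact_Icc cg])
  let ?F = "\<lambda>\<xi>. - c * exp (- M * \<xi>) * \<psi> \<xi>"
  have cF: "continuous_on {x..0} ?F" by (intro continuous_intros c\<psi>)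
  have "(?g has_integral (?F 0 - ?F x)) {x..0}"
  proof (rule fundamental_theorem_of_calculus_interior[OF x cF])
    fix \<xi> assume "\<xi> \<in> {x<..<0}"
    then have "(\<psi> has_real_derivative \<psi>' \<xi>) (at \<xi>)" using d\<psi> by auto
    then have "(?F has_real_derivative ?g \<xi>) (at \<xi>)"
      by (auto intro!: derivative_eq_intros simp: algebra_simps)
    then show "(?F has_vector_derivative ?g \<xi>) (at \<xi>)"
      by (simp add: has_real_derivative_iff_has_vector_derivative)
  qed
  then have "integral {x..0} ?g = ?F 0 - ?F x" by (rule integral_unique)
  then show "(LINT \<xi>:{x..0}|lborel. ?g \<xi>) = c * (exp (- M * x) * \<psi> x - \<psi> 0)"
    using set_borel_integral_eq_integral(2)[OF si] by (simp add: algebra_simps)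
qed

lemma exp_cancel: "exp (M * x) * exp (- M * x) = 1"
  by (simp add: exp_add[symmetric])

lemma CMP_le:
  assumes \<phi>: "Adm \<phi>" and x: "x < 0" and c\<psi>: "continuous_on {x..0} \<psi>" and c\<psi>': "continuous_on {x..0} \<psi>'"
    and d\<psi>: "\<And>\<xi>. x < \<xi> \<Longrightarrow> \<xi> < 0 \<Longrightarrow> (\<psi> has_real_derivative \<psi>' \<xi>) (at \<xi>)"
    and le: "\<And>\<xi>. x \<le> \<xi> \<Longrightarrow> \<xi> < 0 \<Longrightarrow> H \<phi> \<xi> \<le> c * M * \<psi> \<xi> - c * \<psi>' \<xi>"
  shows "A \<phi> x \<le> \<psi> x + exp (M * x) * (\<sigma> - \<psi> 0)"
proof -
  have "(LINT \<xi>:{x..0}|lborel. exp (- M * \<xi>) * H \<phi> \<xi>)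
        \<le> (LINT \<xi>:{x..0}|lborel. exp (- M * \<xi>) * (c * M * \<psi> \<xi> - c * \<psi>' \<xi>))"
  proof (rule set_integral_mono_AE[OF g_int[OF \<phi>] BP(1)[OF _ c\<psi> c\<psi>' d\<psi>]])
    show "AE \<xi>\<in>{x..0} in lborel. exp (- M * \<xi>) * H \<phi> \<xi> \<le> exp (- M * \<xi>) * (c * M * \<psi> \<xi> - c * \<psi>' \<xi>)"
      using AE_lborel_singleton[of 0] by eventually_elim (auto intro!: mult_left_mono le)
  qed (use x in auto)
  also have "\<dots> = c * (exp (- M * x) * \<psi> x - \<psi> 0)" by (rule BP(2)[OF _ c\<psi> c\<psi>' d\<psi>]) (use x in auto)
  finally have I: "(LINT \<xi>:{x..0}|lborel. exp (- M * \<xi>) * H \<phi> \<xi>) \<le> c * (exp (- M * x) * \<psi> x - \<psi> 0)" .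
  have "A \<phi> x = exp (M * x) * \<sigma> + exp (M * x) / c * (LINT \<xi>:{x..0}|lborel. exp (- M * \<xi>) * H \<phi> \<xi>)"
    using A_eq[OF \<phi>, of x] x by simp
  also have "\<dots> \<le> exp (M * x) * \<sigma> + exp (M * x) / c * (c * (exp (- M * x) * \<psi> x - \<psi> 0))"
    using I c_pos by (intro add_left_mono mult_left_mono) auto
  also have "\<dots> = \<psi> x + exp (M * x) * (\<sigma> - \<psi> 0)"
    using c_pos exp_cancel[of x] by (simp add: field_simps)
  finally show ?thesis .
qed

lemma CMP_ge:
  assumes \<phi>: "Adm \<phi>" and x: "x < 0" and c\<psi>: "continuous_on {x..0} \<psi>" and c\<psi>': "continuous_on {x..0} \<psi>'"
    and d\<psi>: "\<And>\<xi>. x < \<xi> \<Longrightarrow> \<xi> < 0 \<Longrightarrow> (\<psi> has_real_derivative \<psi>' \<xi>) (at \<xi>)"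
    and le: "\<And>\<xi>. x \<le> \<xi> \<Longrightarrow> \<xi> < 0 \<Longrightarrow> H \<phi> \<xi> \<ge> c * M * \<psi> \<xi> - c * \<psi>' \<xi>"
  shows "A \<phi> x \<ge> \<psi> x + exp (M * x) * (\<sigma> - \<psi> 0)"
proof -
  have "(LINT \<xi>:{x..0}|lborel. exp (- M * \<xi>) * H \<phi> \<xi>)
        \<ge> (LINT \<xi>:{x..0}|lborel. exp (- M * \<xi>) * (c * M * \<psi> \<xi> - c * \<psi>' \<xi>))"
  proof (rule set_integral_mono_AE[OF BP(1)[OF _ c\<psi> c\<psi>' d\<psi>] g_int[OF \<phi>]])
    show "AE \<xi>\<in>{x..0} in lborel. exp (- M * \<xi>) * (c * M * \<psi> \<xi> - c * \<psi>' \<xi>) \<le> exp (- M * \<xi>) * H \<phi> \<xi>"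
      using AE_lborel_singleton[of 0] by eventually_elim (auto intro!: mult_left_mono le)
  qed (use x in auto)
  also have "(LINT \<xi>:{x..0}|lborel. exp (- M * \<xi>) * (c * M * \<psi> \<xi> - c * \<psi>' \<xi>)) = c * (exp (- M * x) * \<psi> x - \<psi> 0)"
    by (rule BP(2)[OF _ c\<psi> c\<psi>' d\<psi>]) (use x in auto)
  finally have I: "(LINT \<xi>:{x..0}|lborel. exp (- M * \<xi>) * H \<phi> \<xi>) \<ge> c * (exp (- M * x) * \<psi> x - \<psi> 0)" .
  have "A \<phi> x = exp (M * x) * \<sigma> + exp (M * x) / c * (LINT \<xi>:{x..0}|lborel. exp (- M * \<xi>) * H \<phi> \<xi>)"
    using A_eq[OF \<phi>, of x] x by simp
  also have "\<dots> \<ge> exp (M * x) * \<sigma> + exp (M * x) / c * (c * (exp (- M * x) * \<psi> x - \<psi> 0))"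
    using I c_pos by (intro add_left_mono mult_left_mono) auto
  also have "exp (M * x) * \<sigma> + exp (M * x) / c * (c * (exp (- M * x) * \<psi> x - \<psi> 0)) = \<psi> x + exp (M * x) * (\<sigma> - \<psi> 0)"
    using c_pos exp_cancel[of x] by (simp add: field_simps)
  finally show ?thesis .
qed

lemma H_mono:
  assumes "Adm \<phi>" "Adm \<psi>" "\<And>y. \<phi> y \<le> \<psi> y"
  shows "H \<phi> \<xi> \<le> H \<psi> \<xi>"
proof -
  have "Conv (extd \<phi>) \<xi> \<le> Conv (extd \<psi>) \<xi>"
    by (rule conv_mono[where Ba=1 and Bb=1])
       (use assms extd_Adm Adm_abs Adm_meas sig0 sig1 in \<open>auto simp: extd_def\<close>)
  moreover have "ftilde d f c M (\<phi> \<xi>) \<le> ftilde d f c M (\<psi> \<xi>)"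
    using ft_mono[of "\<phi> \<xi>" "\<psi> \<xi>"] assms Adm_lo[of \<phi> \<xi>] Adm_hi[of \<psi> \<xi>] sig0 by auto
  ultimately show ?thesis unfolding H_def using d_pos by (simp add: mult_left_mono add_mono)
qed

lemma A_mono:
  assumes "Adm \<phi>" "Adm \<psi>" "\<And>y. \<phi> y \<le> \<psi> y"
  shows "A \<phi> x \<le> A \<psi> x"
proof (cases "0 \<le> x")
  case True then show ?thesis using A_eq[OF assms(1)] A_eq[OF assms(2)] by simp
next
  case False
  have "(LINT \<xi>:{x..0}|lborel. exp (- M * \<xi>) * H \<phi> \<xi>) \<le> (LINT \<xi>:{x..0}|lborel. exp (- M * \<xi>) * H \<psi> \<xi>)"
    by (rule set_integral_mono[OF g_int[OF assms(1)] g_int[OF assms(2)]])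
       (auto intro!: mult_left_mono H_mono assms)
  then show ?thesis using A_eq[OF assms(1), of x] A_eq[OF assms(2), of x] False c_pos
    by (auto intro!: mult_left_mono divide_right_mono)
qed

lemma A_ge0: "A \<phi> x = \<sigma>" if "0 \<le> x" using that unfolding Aop_def by simp

lemma A_bounds:
  assumes \<phi>: "Adm \<phi>" shows "\<sigma> \<le> A \<phi> x" "A \<phi> x \<le> 1"
proof -
  have "\<sigma> \<le> A \<phi> x \<and> A \<phi> x \<le> 1"
  proof (cases "0 \<le> x")
    case True then show ?thesis using A_ge0 sig1 by simp
  next
    case False
    then have x: "x < 0" by simp
    have "A \<phi> x \<le> 1 + exp (M * x) * (\<sigma> - 1)"
      by (rule CMP_le[OF \<phi> x, where \<psi>'="\<lambda>_. 0"]) (use H_bounds[OF \<phi>] in auto)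
    moreover have "A \<phi> x \<ge> \<sigma> + exp (M * x) * (\<sigma> - \<sigma>)"
      by (rule CMP_ge[OF \<phi> x, where \<psi>'="\<lambda>_. 0"]) (use H_bounds[OF \<phi>] in auto)
    moreover have "exp (M * x) * (\<sigma> - 1) \<le> 0" using sig1 by (simp add: mult_nonneg_nonpos)
    ultimately show ?thesis by simp
  qed
  then show "\<sigma> \<le> A \<phi> x" "A \<phi> x \<le> 1" by auto
qed

lemma I_cont:
  assumes \<phi>: "Adm \<phi>" and a: "a \<le> 0"
  shows "continuous_on {a..0} (\<lambda>x. LINT \<xi>:{x..0}|lborel. exp (- M * \<xi>) * H \<phi> \<xi>)"
proof -
  have int: "(\<lambda>\<xi>. exp (- M * \<xi>) * H \<phi> \<xi>) integrable_on {a..0}"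
    using set_borel_integral_eq_integral(1)[OF g_int[OF \<phi>]] .
  have "continuous_on {a..0} (\<lambda>x. integral {x..0} (\<lambda>\<xi>. exp (- M * \<xi>) * H \<phi> \<xi>))"
    by (rule indefinite_integral_continuous_1'[OF int])
  then show ?thesis
    by (rule continuous_on_cong[THEN iffD1, rotated 2])
       (use set_borel_integral_eq_integral(2)[OF g_int[OF \<phi>]] in auto)
qed

lemma A_cont:
  assumes \<phi>: "Adm \<phi>" shows "continuous_on UNIV (A \<phi>)"
proof -
  let ?I = "\<lambda>x. LINT \<xi>:{x..0}|lborel. exp (- M * \<xi>) * H \<phi> \<xi>"
  let ?F = "\<lambda>x. exp (M * x) * \<sigma> + exp (M * x) / c * ?I x"
  have I0: "?I 0 = 0"
    using set_borel_integral_eq_integral(2)[OF g_int[OF \<phi>], of 0] by simp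
  have AF: "A \<phi> x = ?F (min x 0)" for x
    using A_eq[OF \<phi>, of x] I0 by (cases "0 \<le> x") (auto simp: min_def)
  show ?thesis
  proof (clarsimp simp: continuous_on_eq_continuous_at)
    fix x0 :: real
    define a where "a = min x0 0 - 1"
    have a0: "a \<le> 0" unfolding a_def by simp
    have cF: "continuous_on {a..0} ?F" using c_pos by (intro continuous_intros I_cont[OF \<phi> a0]) auto
    have "continuous_on {a<..} (\<lambda>x. ?F (min x 0))"
      by (rule continuous_on_compose2[OF cF]) (use a0 in \<open>auto intro!: continuous_intros\<close>)
    then have "continuous_on {a<..} (A \<phi>)" by (simp add: AF)
    then show "isCont (A \<phi>) x0"
      by (rule continuous_on_interior) (auto simp: a_def interior_open)
  qed
qed

lemma A_Adm: assumes "Adm \<phi>" shows "Adm (A \<phi>)"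
  unfolding Adm_def using A_bounds[OF assms] A_cont[OF assms]
  by (auto intro: borel_measurable_continuous_onI)


lemma deriv_antimono:
  fixes g :: "real \<Rightarrow> real"
  assumes "antimono g" "(g has_real_derivative l) (at x)" shows "l \<le> 0"
proof (rule ccontr)
  assume "\<not> l \<le> 0"
  then obtain e where e: "e > 0" "\<forall>h>0. h < e \<longrightarrow> g (x - h) < g x"
    using DERIV_pos_inc_left[OF assms(2)] by force
  then have "g (x - e/2) < g x" by auto
  moreover have "g x \<le> g (x - e/2)" using assms(1) e(1) by (auto simp: antimono_def)
  ultimately show False by simp
qed

lemma TW_parts:
  shows ps_anti: "antimono ps" and ps_top: "(ps \<longlongrightarrow> 0) at_top" and ps_bot: "(ps \<longlongrightarrow> 1) at_bot"
    and ps_der: "\<exists>ps'. \<forall>x. (ps has_real_derivative ps' x) (at x)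
          \<and> d * (\<integral>y. J (x - y) * ps y \<partial>lborel) - d * ps x + cs * ps' x + f (ps x) = 0"
  using TW unfolding is_TW_def by auto

lemma ps_bounds: "0 \<le> ps x" "ps x \<le> 1"
proof -
  have "eventually (\<lambda>y. ps y \<le> ps x) at_top"
    using eventually_ge_at_top[of x] by eventually_elim (use ps_anti in \<open>auto simp: antimono_def\<close>)
  then show "0 \<le> ps x" using tendsto_le[OF trivial_limit_at_top_linorder tendsto_const ps_top] by blast
  have "eventually (\<lambda>y. ps x \<le> ps y) at_bot"
    using eventually_le_at_bot[of x] by eventually_elim (use ps_anti in \<open>auto simp: antimono_def\<close>)
  then show "ps x \<le> 1" using tendsto_le[OF trivial_limit_at_bot_linorder ps_bot tendsto_const] by blast
qed

lemma ps_abs: "\<bar>ps x\<bar> \<le> 1" using ps_bounds[of x] by auto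

lemma ps_cont: "continuous_on UNIV ps"
  using ps_der by (auto simp: continuous_on_eq_continuous_at intro: DERIV_isCont)

lemma ps_meas[measurable]: "ps \<in> borel_measurable borel"
  using ps_cont by (rule borel_measurable_continuous_onI)

lemma ps_le_sig: "0 \<le> x \<Longrightarrow> ps x \<le> \<sigma>" using ps_anti ps0 by (auto simp: antimono_def)
lemma ps_ge_sig: "x \<le> 0 \<Longrightarrow> \<sigma> \<le> ps x" using ps_anti ps0 by (auto simp: antimono_def)

lemma cs_pos: "cs > 0" using c_pos c_lt by simp

lemma f_comp_cont:
  assumes "continuous_on UNIV g" "\<And>y. 0 \<le> g y"
  shows "continuous_on UNIV (\<lambda>y. f (g y))"
  by (rule continuous_on_compose2[OF f_cont assms(1)]) (use assms(2) in auto)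

definition pd :: "real \<Rightarrow> real" where
  "pd \<xi> = - (d * Conv ps \<xi> - d * ps \<xi> + f (ps \<xi>)) / cs"

lemma pd_cont: "continuous_on UNIV pd"
  unfolding pd_def[abs_def]
  using cs_pos conv_cont[OF ps_cont ps_abs] f_comp_cont[OF ps_cont ps_bounds(1)]
  by (intro continuous_intros ps_cont) auto

lemma ps_deriv: "(ps has_real_derivative pd x) (at x)" "pd x \<le> 0"
proof -
  obtain ps' where ps': "\<And>x. (ps has_real_derivative ps' x) (at x)"
      "\<And>x. d * (\<integral>y. J (x - y) * ps y \<partial>lborel) - d * ps x + cs * ps' x + f (ps x) = 0"
    using ps_der by blast
  have "ps' x = pd x" using ps'(2)[of x] cs_pos unfolding pd_def Conv_def by (simp add: field_simps)
  then show "(ps has_real_derivative pd x) (at x)" using ps'(1)[of x] by simp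
  then show "pd x \<le> 0" using deriv_antimono[OF ps_anti] by blast
qed

definition phs :: "real \<Rightarrow> real" where "phs = (\<lambda>y. max (ps y) \<sigma>)"

lemma phs_Adm: "Adm phs"
  unfolding Adm_def phs_def using ps_bounds sig1 by (auto)

lemma phs_anti: "x \<le> y \<Longrightarrow> phs y \<le> phs x"
proof -
  assume "x \<le> y"
  then have "ps y \<le> ps x" using ps_anti by (auto simp: antimono_def)
  then show ?thesis unfolding phs_def by (simp add: max_def)
qed

lemma step0: "phs x \<le> A phs x"
proof (cases "0 \<le> x")
  case True then show ?thesis using A_ge0 ps_le_sig unfolding phs_def by simp
next
  case False
  then have x: "x < 0" by simp
  have "A phs x \<ge> ps x + exp (M * x) * (\<sigma> - ps 0)"
  proof (rule CMP_ge[OF phs_Adm x, where \<psi>'=pd])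
    show "continuous_on {x..0} ps" using ps_cont by (rule continuous_on_subset) auto
    show "continuous_on {x..0} pd" using pd_cont by (rule continuous_on_subset) auto
    show "(ps has_real_derivative pd \<xi>) (at \<xi>)" for \<xi> using ps_deriv(1) .
    fix \<xi> assume \<xi>: "x \<le> \<xi>" "\<xi> < 0"
    have "Conv ps \<xi> \<le> Conv (extd phs) \<xi>"
      by (rule conv_mono[where Ba=1 and Bb=1])
        (use ps_abs extd_Adm[OF phs_Adm] Adm_abs Adm_meas ps_le_sig ps_bounds sig0 sig1 in \<open>auto simp: extd_def phs_def\<close>)
    moreover have "phs \<xi> = ps \<xi>" using ps_ge_sig[of \<xi>] \<xi> unfolding phs_def by simp
    moreover have "cs * pd \<xi> \<le> c * pd \<xi>" using ps_deriv(2)[of \<xi>] c_lt by (simp add: mult_right_mono_neg)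
    moreover have "cs * pd \<xi> = - (d * Conv ps \<xi> - d * ps \<xi> + f (ps \<xi>))"
      unfolding pd_def using cs_pos by simp
    moreover have "d * Conv ps \<xi> \<le> d * Conv (extd phs) \<xi>"
      using calculation(1) d_pos by simp
    ultimately show "c * M * ps \<xi> - c * pd \<xi> \<le> H phs \<xi>"
      unfolding H_def ftilde_def by (simp add: algebra_simps)
  qed
  then show ?thesis using ps0 ps_ge_sig[of x] x unfolding phs_def by simp
qed

definition it :: "nat \<Rightarrow> real \<Rightarrow> real" where "it n = (A ^^ n) phs"
definition u :: "real \<Rightarrow> real" where "u x = lim (\<lambda>n. it n x)"

lemma it_0: "it 0 = phs" by (simp add: it_def)
lemma it_Suc: "it (Suc n) = A (it n)" by (simp add: it_def)

lemma it_Adm: "Adm (it n)"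
  by (induction n) (auto simp: it_0 it_Suc phs_Adm A_Adm)

lemma it_inc: "it n x \<le> it (Suc n) x"
proof (induction n arbitrary: x)
  case 0 then show ?case using step0 by (simp add: it_0 it_Suc)
next
  case (Suc n) then show ?case
    unfolding it_Suc[of "Suc n"] it_Suc[of n] by (intro A_mono it_Adm[unfolded it_Suc] A_Adm) (auto simp: it_Suc)
qed

lemma it_incseq: "incseq (\<lambda>n. it n x)"
  using it_inc by (simp add: incseq_SucI)

lemma it_lim: "(\<lambda>n. it n x) \<longlonglongrightarrow> u x"
proof -
  have "bdd_above (range (\<lambda>n. it n x))" by (rule bdd_aboveI[where M=1]) (use Adm_hi[OF it_Adm] in auto)
  then have "(\<lambda>n. it n x) \<longlonglongrightarrow> (SUP n. it n x)" using LIMSEQ_incseq_SUP it_incseq by blast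
  then show ?thesis unfolding u_def using limI by (metis)
qed

lemma it_le_u: "it n x \<le> u x" using incseq_le[OF it_incseq it_lim] .

lemma u_Adm: "Adm u"
proof -
  have "u \<in> borel_measurable borel"
    by (rule borel_measurable_LIMSEQ_real[OF it_lim]) (use Adm_meas[OF it_Adm] in auto)
  moreover have "\<sigma> \<le> u x" for x using it_le_u[of 0 x] Adm_lo[OF it_Adm, of 0 x] by simp
  moreover have "u x \<le> 1" for x by (rule LIMSEQ_le_const2[OF it_lim]) (use Adm_hi[OF it_Adm] in auto)
  ultimately show ?thesis unfolding Adm_def by auto
qed

lemma H_lim:
  assumes gs: "\<And>n. Adm (gs n)" and g: "Adm g" and lim: "\<And>y. (\<lambda>n. gs n y) \<longlonglongrightarrow> g y"
  shows "(\<lambda>n. H (gs n) \<xi>) \<longlonglongrightarrow> H g \<xi>"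
proof -
  have "(\<lambda>n. Conv (extd (gs n)) \<xi>) \<longlonglongrightarrow> Conv (extd g) \<xi>"
  proof (rule conv_lim[where B=1])
    show "extd (gs n) \<in> borel_measurable borel" for n using Adm_meas[OF extd_Adm[OF gs]] .
    show "extd g \<in> borel_measurable borel" using Adm_meas[OF extd_Adm[OF g]] .
    show "\<bar>extd (gs n) y\<bar> \<le> 1" for n y using Adm_abs[OF extd_Adm[OF gs]] .
    show "(\<lambda>n. extd (gs n) y) \<longlonglongrightarrow> extd g y" for y
      unfolding extd_def using lim by (cases "y \<le> 0") auto
  qed
  moreover have "(\<lambda>n. f (gs n \<xi>)) \<longlonglongrightarrow> f (g \<xi>)"
  proof (rule continuous_on_tendsto_compose[OF f_cont lim])
    show "g \<xi> \<in> {0..}" using Adm_lo[OF g, of \<xi>] sig0 by simp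
    show "\<forall>\<^sub>F n in sequentially. gs n \<xi> \<in> {0..}" using Adm_lo[OF gs] sig0
      by (auto intro!: always_eventually less_imp_le intro: less_le_trans)
  qed
  ultimately show ?thesis unfolding H_def ftilde_def
    by (intro tendsto_intros lim)
qed

lemma A_lim:
  assumes gs: "\<And>n. Adm (gs n)" and g: "Adm g" and lim: "\<And>y. (\<lambda>n. gs n y) \<longlonglongrightarrow> g y"
  shows "(\<lambda>n. A (gs n) x) \<longlonglongrightarrow> A g x"
proof (cases "0 \<le> x")
  case True then show ?thesis by (simp add: A_ge0)
next
  case False
  have "(\<lambda>n. LINT \<xi>:{x..0}|lborel. exp (- M * \<xi>) * H (gs n) \<xi>) \<longlonglongrightarrow> (LINT \<xi>:{x..0}|lborel. exp (- M * \<xi>) * H g \<xi>)"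
    unfolding set_lebesgue_integral_def
  proof (rule integral_dominated_convergence[where w="\<lambda>\<xi>. indicator {x..0} \<xi> * (exp (- M * x) * (c * M))"])
    have [measurable]: "H g \<in> borel_measurable borel" "\<And>n. H (gs n) \<in> borel_measurable borel"
      using H_meas g gs by auto
    show "(\<lambda>\<xi>. indicat_real {x..0} \<xi> *\<^sub>R (exp (- M * \<xi>) * H g \<xi>)) \<in> borel_measurable lborel" by measurable
    show "(\<lambda>\<xi>. indicat_real {x..0} \<xi> *\<^sub>R (exp (- M * \<xi>) * H (gs n) \<xi>)) \<in> borel_measurable lborel" for n
      by measurable
    show "integrable lborel (\<lambda>\<xi>. indicator {x..0} \<xi> * (exp (- M * x) * (c * M)))"
      by (intro integrable_mult_left integrable_real_indicator) (use emeasure_bounded_finite[of "{x..0}"] in auto)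
    show "AE \<xi> in lborel. (\<lambda>n. indicat_real {x..0} \<xi> *\<^sub>R (exp (- M * \<xi>) * H (gs n) \<xi>))
          \<longlonglongrightarrow> indicat_real {x..0} \<xi> *\<^sub>R (exp (- M * \<xi>) * H g \<xi>)"
      by (intro AE_I2 tendsto_intros H_lim gs g lim)
    show "AE \<xi> in lborel. norm (indicat_real {x..0} \<xi> *\<^sub>R (exp (- M * \<xi>) * H (gs n) \<xi>))
          \<le> indicator {x..0} \<xi> * (exp (- M * x) * (c * M))" for n
    proof (intro AE_I2)
      fix \<xi>
      show "norm (indicat_real {x..0} \<xi> *\<^sub>R (exp (- M * \<xi>) * H (gs n) \<xi>))
          \<le> indicator {x..0} \<xi> * (exp (- M * x) * (c * M))"
      proof (cases "\<xi> \<in> {x..0}")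
        case True
        then have "exp (- M * \<xi>) \<le> exp (- M * x)" using M_pos by (auto intro: mult_left_mono)
        moreover have "0 \<le> H (gs n) \<xi>" "H (gs n) \<xi> \<le> c * M" using H_bounds[OF gs, of n \<xi>] c_pos M_pos sig0
          by (auto intro: order_trans[rotated])
        ultimately show ?thesis using True by (simp add: abs_mult mult_mono)
      qed simp
    qed
  qed
  then have "(\<lambda>n. exp (M * x) * \<sigma> + exp (M * x) / c * (LINT \<xi>:{x..0}|lborel. exp (- M * \<xi>) * H (gs n) \<xi>))
     \<longlonglongrightarrow> exp (M * x) * \<sigma> + exp (M * x) / c * (LINT \<xi>:{x..0}|lborel. exp (- M * \<xi>) * H g \<xi>)"
    by (intro tendsto_add tendsto_mult tendsto_const)
  then show ?thesis using A_eq[OF gs] A_eq[OF g] False by simp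
qed

lemma u_fix: "A u x = u x"
proof -
  have "(\<lambda>n. A (it n) x) \<longlonglongrightarrow> A u x" by (rule A_lim[OF it_Adm u_Adm it_lim])
  moreover have "(\<lambda>n. A (it n) x) \<longlonglongrightarrow> u x"
    using it_lim[of x] unfolding it_Suc[symmetric] by (rule LIMSEQ_Suc)
  ultimately show ?thesis by (rule LIMSEQ_unique)
qed

lemma u_eqA: "A u = u" using u_fix by (simp add: fun_eq_iff)

lemma u_cont: "continuous_on UNIV u" using A_cont[OF u_Adm] by (simp add: u_eqA)

lemma u_sig: "0 \<le> x \<Longrightarrow> u x = \<sigma>" using u_fix[of x] A_ge0 by simp

lemma extd_u: "extd u = u" using u_sig by (auto simp: extd_def fun_eq_iff)

lemma Hu_eq: "H u \<xi> = d * Conv u \<xi> + ((c * M - d) * u \<xi> + f (u \<xi>))"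
  unfolding H_def extd_u ftilde_def ..

lemma Hu_cont: "continuous_on UNIV (H u)"
proof -
  have "continuous_on UNIV (\<lambda>\<xi>. d * Conv u \<xi> + ((c * M - d) * u \<xi> + f (u \<xi>)))"
    using conv_cont[OF u_cont Adm_abs[OF u_Adm]] f_comp_cont[OF u_cont] Adm_lo[OF u_Adm] sig0
    by (intro continuous_intros u_cont) (auto intro: less_imp_le less_le_trans)
  then show ?thesis by (simp add: Hu_eq[abs_def])
qed

definition ud :: "real \<Rightarrow> real" where "ud \<xi> = M * u \<xi> - H u \<xi> / c"

lemma ud_cont: "continuous_on UNIV ud"
  unfolding ud_def[abs_def] using c_pos by (intro continuous_intros u_cont Hu_cont) auto

lemma alg: "(m::real) * E * s + (m * E / c * I + E / c * (- (E' * h))) = m * (E * s + E / c * I) - (E * E') * h / c"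
  by (simp add: algebra_simps)

lemma u_deriv:
  assumes x: "x < 0" shows "(u has_real_derivative ud x) (at x)"
proof -
  let ?g = "\<lambda>\<xi>. exp (- M * \<xi>) * H u \<xi>"
  let ?I = "\<lambda>y. integral {y..0} ?g"
  let ?F = "\<lambda>y. exp (M * y) * \<sigma> + exp (M * y) / c * ?I y"
  have cg: "continuous_on UNIV ?g" by (rule continuous_on_mult[OF _ Hu_cont]) (intro continuous_intros)
  have D0: "(?I has_real_derivative - ?g x) (at x within {x - 1..0})"
    by (rule integral_has_real_derivative'[OF continuous_on_subset[OF cg]]) (use x in auto)
  have "x \<in> {x - 1<..<0}" using x by simp
  then have xi: "x \<in> interior {x - 1..0}" by (simp only: interior_atLeastAtMost_real)
  have D: "(?I has_real_derivative - ?g x) (at x)" using D0[unfolded at_within_interior[OF xi]] .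
  have DF: "(?F has_real_derivative (M * exp (M * x) * \<sigma> + (M * exp (M * x) / c * ?I x + exp (M * x) / c * (- ?g x)))) (at x)"
  proof -
    have E1: "((\<lambda>y. exp (M * y)) has_real_derivative M * exp (M * x)) (at x)"
      using DERIV_exp[of "M * x"] DERIV_cmult_Id[of M x] DERIV_chain2 by (metis mult.commute)
    show ?thesis
      using DERIV_add[OF DERIV_mult[OF E1 DERIV_const[of \<sigma>]] DERIV_mult[OF DERIV_cdivide[OF E1, of c] D]]
      by (simp add: ac_simps)
  qed
  have eq: "?F y = u y" if "y \<in> {..<0}" for y
  proof -
    have "u y = A u y" using u_fix by simp
    also have "\<dots> = ?F y" using A_eq[OF u_Adm, of y] that
      set_borel_integral_eq_integral(2)[OF g_int[OF u_Adm, of y]] by simp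
    finally show ?thesis by simp
  qed
  have "(u has_real_derivative (M * exp (M * x) * \<sigma> + (M * exp (M * x) / c * ?I x + exp (M * x) / c * (- ?g x)))) (at x)"
    by (rule has_field_derivative_transform_within_open[OF DF, of "{..<0}"]) (use x eq in auto)
  moreover have "M * exp (M * x) * \<sigma> + (M * exp (M * x) / c * ?I x + exp (M * x) / c * (- ?g x)) = ud x"
  proof -
    have "M * exp (M * x) * \<sigma> + (M * exp (M * x) / c * ?I x + exp (M * x) / c * (- ?g x))
        = M * ?F x - (exp (M * x) * exp (- M * x)) * H u x / c"
      using alg[of M "exp (M * x)" \<sigma> "?I x" "exp (- M * x)" "H u x"] by simp
    also have "\<dots> = M * u x - H u x / c" using eq[of x] x exp_cancel[of x] by simp
    finally show ?thesis unfolding ud_def .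
  qed
  ultimately show ?thesis by simp
qed

lemma u_ode: "c * ud \<xi> = - (d * Conv u \<xi> - d * u \<xi> + f (u \<xi>))"
  unfolding ud_def Hu_eq using c_pos by (simp add: field_simps)



lemma u_le_super:
  assumes v: "Adm v" and start: "\<And>x. phs x \<le> v x" and sup: "\<And>x. A v x \<le> v x"
  shows "u x \<le> v x"
proof -
  have "it n y \<le> v y" for n y
  proof (induction n arbitrary: y)
    case 0 then show ?case using start by (simp add: it_0)
  next
    case (Suc n)
    have "A (it n) y \<le> A v y" by (rule A_mono[OF it_Adm v]) (use Suc in auto)
    then show ?case using sup[of y] by (simp add: it_Suc)
  qed
  then show ?thesis by (intro LIMSEQ_le_const2[OF it_lim]) auto
qed

lemma super_crit:
  assumes v: "Adm v" and cv: "continuous_on UNIV v" and cv': "continuous_on UNIV v'"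
    and dv: "\<And>\<xi>. \<xi> < 0 \<Longrightarrow> (v has_real_derivative v' \<xi>) (at \<xi>)"
    and le: "\<And>\<xi>. \<xi> < 0 \<Longrightarrow> H v \<xi> \<le> c * M * v \<xi> - c * v' \<xi>"
  shows "A v x \<le> v x"
proof (cases "0 \<le> x")
  case True then show ?thesis using A_ge0 Adm_lo[OF v] by simp
next
  case False
  then have x: "x < 0" by simp
  have "A v x \<le> v x + exp (M * x) * (\<sigma> - v 0)"
    by (rule CMP_le[OF v x continuous_on_subset[OF cv] continuous_on_subset[OF cv']])
       (use dv le in auto)
  moreover have "exp (M * x) * (\<sigma> - v 0) \<le> 0" using Adm_lo[OF v, of 0]
    by (simp add: mult_nonneg_nonpos)
  ultimately show ?thesis by simp
qed

lemma u_shift_le: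
  assumes h: "h > 0" shows "u x \<le> u (x - h)"
proof -
  define uh where "uh = (\<lambda>y. u (y - h))"
  have cuh: "continuous_on UNIV uh" unfolding uh_def
    by (rule continuous_on_compose2[OF u_cont]) (auto intro!: continuous_intros)
  have Auh: "Adm uh" unfolding Adm_def
    using Adm_lo[OF u_Adm] Adm_hi[OF u_Adm] borel_measurable_continuous_onI[OF cuh]
    by (auto simp: uh_def)
  have cud: "continuous_on UNIV (\<lambda>\<xi>. ud (\<xi> - h))"
    by (rule continuous_on_compose2[OF ud_cont]) (auto intro!: continuous_intros)
  have "A uh y \<le> uh y" for y
  proof (rule super_crit[OF Auh cuh cud])
    fix \<xi> :: real assume \<xi>: "\<xi> < 0"
    have "(u has_real_derivative ud (\<xi> - h)) (at (\<xi> - h))" using u_deriv \<xi> h by simp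
    moreover have "((\<lambda>y. y - h) has_real_derivative 1) (at \<xi>)"
      by (auto intro!: derivative_eq_intros)
    ultimately have "((\<lambda>y. u (y - h)) has_real_derivative ud (\<xi> - h) * 1) (at \<xi>)"
      by (rule DERIV_chain2[where f=u and g="\<lambda>y. y - h" and x=\<xi>])
    then show "(uh has_real_derivative ud (\<xi> - h)) (at \<xi>)" unfolding uh_def by simp
    have "Conv (extd uh) \<xi> \<le> Conv uh \<xi>"
      by (rule conv_mono[where Ba=1 and Bb=1])
         (use Auh extd_Adm[OF Auh] Adm_abs Adm_meas Adm_lo sig0 sig1 in \<open>auto simp: extd_def\<close>)
    also have "Conv uh \<xi> = Conv u (\<xi> - h)" unfolding uh_def by (rule conv_shift)
    finally have C: "d * Conv (extd uh) \<xi> \<le> d * Conv u (\<xi> - h)" using d_pos by simp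
    have "c * ud (\<xi> - h) = - (d * Conv u (\<xi> - h) - d * u (\<xi> - h) + f (u (\<xi> - h)))" by (rule u_ode)
    then show "H uh \<xi> \<le> c * M * uh \<xi> - c * ud (\<xi> - h)"
      using C unfolding H_def ftilde_def uh_def by (simp add: algebra_simps)
  qed
  moreover have "phs y \<le> uh y" for y
    using phs_anti[of "y - h" y] h it_le_u[of 0 "y - h"] unfolding uh_def it_0 by simp
  ultimately have "u x \<le> uh x" by (intro u_le_super[OF Auh]) auto
  then show ?thesis by (simp add: uh_def)
qed

lemma u_anti: "antimono u"
proof (rule antimonoI)
  fix x y :: real assume "x \<le> y"
  then show "u y \<le> u x"
  proof (cases "x = y")
    case False
    then have "y - x > 0" using \<open>x \<le> y\<close> by simp
    from u_shift_le[OF this, of y] show ?thesis by simp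
  qed simp
qed

lemma ud_nonpos: "\<xi> < 0 \<Longrightarrow> ud \<xi> \<le> 0"
  using deriv_antimono[OF u_anti u_deriv] by blast

end

theorem lemma2p3:
  fixes d c1 c2 M1 M2 :: real and J f :: "real \<Rightarrow> real" and \<Phi> :: "real \<Rightarrow> real \<Rightarrow> real"
  assumes "d > 0" and "cond_J J" and "cond_J2 J" and "cond_f3 f"
    and "0 < c1" and "c1 < c2" and "c2 < cstar d J f"
    and "M1 > 0" and "strict_mono_on {0..1} (ftilde d f c1 M1)"
    and "M2 > 0" and "strict_mono_on {0..1} (ftilde d f c2 M2)"
    and "\<And>\<sigma>. 0 < \<sigma> \<Longrightarrow> \<sigma> < 1 \<Longrightarrow> is_TW d J f (cstar d J f) (\<Phi> \<sigma>) \<and> \<Phi> \<sigma> 0 = \<sigma>"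
  shows "\<exists>\<delta>0. 0 < \<delta>0 \<and> \<delta>0 \<le> 1 \<and> (\<forall>\<sigma>. 0 < \<sigma> \<and> \<sigma> < \<delta>0 \<longrightarrow>
            (\<forall>x. phi_iter d J f c1 M1 \<sigma> (\<Phi> \<sigma>) x \<ge> phi_iter d J f c2 M2 \<sigma> (\<Phi> \<sigma>) x))"
proof (intro exI[of _ 1] conjI allI impI)
  fix \<sigma> x :: real assume \<sigma>: "0 < \<sigma> \<and> \<sigma> < 1"
  obtain f' where fd: "\<And>v. v \<ge> 0 \<Longrightarrow> (f has_real_derivative f' v) (at v within {0..})"
    and f1: "f 1 = 0" and fpos: "\<And>v. 0 < v \<Longrightarrow> v < 1 \<Longrightarrow> f v > 0"
    using assms(4) unfolding cond_f3_def by blast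
  have fc: "continuous_on {0..} f"
    unfolding continuous_on_eq_continuous_within using DERIV_continuous[OF fd] by auto
  have TW: "is_TW d J f (cstar d J f) (\<Phi> \<sigma>)" "\<Phi> \<sigma> 0 = \<sigma>" using assms(12) \<sigma> by auto
  interpret I1: iter d J f c1 M1 \<sigma> "cstar d J f" "\<Phi> \<sigma>"
    by unfold_locales (use assms \<sigma> fc f1 fpos TW in auto)
  interpret I2: iter d J f c2 M2 \<sigma> "cstar d J f" "\<Phi> \<sigma>"
    by unfold_locales (use assms \<sigma> fc f1 fpos TW in auto)
  have p1: "phi_iter d J f c1 M1 \<sigma> (\<Phi> \<sigma>) x = I1.u x"
    unfolding phi_iter_def I1.u_def I1.it_def I1.phs_def ..
  have p2: "phi_iter d J f c2 M2 \<sigma> (\<Phi> \<sigma>) x = I2.u x"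
    unfolding phi_iter_def I2.u_def I2.it_def I2.phs_def ..
  have sup: "I2.A I1.u y \<le> I1.u y" for y
  proof (rule I2.super_crit[OF I1.u_Adm I1.u_cont I1.ud_cont I1.u_deriv])
    fix \<xi> :: real assume \<xi>: "\<xi> < 0"
    have ode: "c1 * I1.ud \<xi> = - (d * I1.Conv I1.u \<xi> - d * I1.u \<xi> + f (I1.u \<xi>))" by (rule I1.u_ode)
    have "c2 * I1.ud \<xi> \<le> c1 * I1.ud \<xi>"
      using I1.ud_nonpos[OF \<xi>] assms(6) by (simp add: mult_right_mono_neg)
    then show "I2.H I1.u \<xi> \<le> c2 * M2 * I1.u \<xi> - c2 * I1.ud \<xi>"
      using ode unfolding I2.H_def I1.extd_u ftilde_def by (simp add: algebra_simps)
  qed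
  have start: "I2.phs y \<le> I1.u y" for y
    using I1.it_le_u[of 0 y] unfolding I1.it_0 I1.phs_def I2.phs_def .
  have "I2.u x \<le> I1.u x" by (rule I2.u_le_super[OF I1.u_Adm start sup])
  then show "phi_iter d J f c2 M2 \<sigma> (\<Phi> \<sigma>) x \<le> phi_iter d J f c1 M1 \<sigma> (\<Phi> \<sigma>) x"
    using p1 p2 by simp
qed simp_all

end
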